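(* Let $k\ge1$ be an integer and $a,b,c\in\mathbb{C}$ such that $2c,\ 2c+2,\ \frac{a+b+1}{2},\ \frac{a+b+3}{2},\ \frac{a+b+5}{2}\notin\{0,-1,-2,\dots\}$, $2c+1\neq0$, and $\mathrm{Re}(2c-a-b-2k+1)>0$. Define $$G_k(a,b,c)={}_3F_2\!\left(\left.\begin{array}{c}a+k,\ b,\ c\\ \frac{a+b+1}{2},\ 2c\end{array}\right|1\right).$$ Then $$G_k(a,b,c)=G_{k-1}(a,b,c)+\frac{b}{a+b+1}\left[\frac{(a+k)(b+1)}{(2c+1)(a+b+3)}\,G_{k-1}(a+2,b+2,c+1)+G_{k-1}(a+1,b+1,c)\right].$$
   Context: ${}_3F_2(a_1,a_2,a_3;b_1,b_2;1)=\sum_{m\ge0}\frac{(a_1)_m(a_2)_m(a_3)_m}{m!\,(b_1)_m(b_2)_m}$ with $(\alpha)_m=\Gamma(\alpha+m)/\Gamma(\alpha)$, absolutely convergent when $\mathrm{Re}(b_1+b_2-a_1-a_2-a_3)>0$. Note $G_{k-1}(a+2,b+2,c+1)={}_3F_2(a+k+1,b+2,c+1;\frac{a+b+5}{2},2c+2;1)$ and $G_{k-1}(a+1,b+1,c)={}_3F_2(a+k,b+1,c;\frac{a+b+3}{2},2c;1)$. *)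

theory Defs
  imports "HOL-Analysis.Analysis"
begin

definition hyp3F2 :: "complex \<Rightarrow> complex \<Rightarrow> complex \<Rightarrow> complex \<Rightarrow> complex \<Rightarrow> complex" where
  "hyp3F2 a1 a2 a3 b1 b2 =
     (\<Sum>m. pochhammer a1 m * pochhammer a2 m * pochhammer a3 m /
           (fact m * pochhammer b1 m * pochhammer b2 m))"

definition G :: "nat \<Rightarrow> complex \<Rightarrow> complex \<Rightarrow> complex \<Rightarrow> complex" where
  "G k a b c = hyp3F2 (a + of_nat k) b c ((a + b + 1) / 2) (2 * c)"

end

theory Submission
  imports Defs
begin

definition T :: "complex \<Rightarrow> complex \<Rightarrow> complex \<Rightarrow> complex \<Rightarrow> complex \<Rightarrow> nat \<Rightarrow> complex" where
  "T a1 a2 a3 b1 b2 m = pochhammer a1 m * pochhammer a2 m * pochhammer a3 m /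
           (fact m * pochhammer b1 m * pochhammer b2 m)"

lemma num_bound:
  fixes z :: complex
  obtains B where "B > 0" "\<And>n. n \<ge> 1 \<Longrightarrow> norm (pochhammer z (Suc n) / fact n) \<le> B * real n powr Re z"
proof -
  have "Bseq (rGamma_series z)" using rGamma_series_LIMSEQ[of z] by (intro convergent_imp_Bseq convergentI)
  then obtain B where B: "B > 0" "\<And>n. norm (rGamma_series z n) \<le> B" by (auto elim: BseqE)
  have "norm (pochhammer z (Suc n) / fact n) \<le> B * real n powr Re z" if "n \<ge> 1" for n
  proof -
    have e: "exp (z * of_real (ln (of_nat n))) \<noteq> 0" by simp
    have "pochhammer z (Suc n) / fact n = rGamma_series z n * exp (z * of_real (ln (of_nat n)))"
      using e by (simp add: rGamma_series_def field_simps)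
    hence "norm (pochhammer z (Suc n) / fact n) = norm (rGamma_series z n) * exp (Re z * ln (real n))"
      by (simp add: norm_mult)
    also have "exp (Re z * ln (real n)) = real n powr Re z" using that by (simp add: powr_def mult.commute)
    finally show ?thesis using B(2)[of n] by (simp add: mult_right_mono)
  qed
  thus ?thesis using B that by blast
qed

lemma den_bound:
  fixes z :: complex
  obtains B where "B > 0" "\<And>n. n \<ge> 1 \<Longrightarrow> norm (fact n / pochhammer z (Suc n)) \<le> B * real n powr (- Re z)"
proof -
  have "Bseq (Gamma_series z)" using Gamma_series_LIMSEQ[of z] by (intro convergent_imp_Bseq convergentI)
  then obtain B where B: "B > 0" "\<And>n. norm (Gamma_series z n) \<le> B" by (auto elim: BseqE)
  have "norm (fact n / pochhammer z (Suc n)) \<le> B * real n powr (- Re z)" if "n \<ge> 1" for n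
  proof -
    have e: "exp (z * of_real (ln (of_nat n))) \<noteq> 0" by simp
    have "fact n / pochhammer z (Suc n) = Gamma_series z n / exp (z * of_real (ln (of_nat n)))"
      using e by (simp add: Gamma_series_def field_simps)
    hence "norm (fact n / pochhammer z (Suc n)) = norm (Gamma_series z n) / exp (Re z * ln (real n))"
      by (simp add: norm_divide)
    also have "1 / exp (Re z * ln (real n)) = real n powr (- Re z)" using that
      by (simp add: powr_def exp_minus field_simps)
    hence "norm (Gamma_series z n) / exp (Re z * ln (real n)) = norm (Gamma_series z n) * real n powr (- Re z)"
      by (simp add: divide_inverse)
    finally show ?thesis using B(2)[of n] by (simp add: mult_right_mono)
  qed
  thus ?thesis using B that by blast
qed

lemma T_Suc_split:
  "T a1 a2 a3 b1 b2 (Suc n) =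
     (pochhammer a1 (Suc n) / fact n) * (pochhammer a2 (Suc n) / fact n) * (pochhammer a3 (Suc n) / fact n)
     * (fact n / pochhammer b1 (Suc n)) * (fact n / pochhammer b2 (Suc n)) / of_nat (Suc n)"
proof -
  have f: "(fact n :: complex) \<noteq> 0" by simp
  have "fact (Suc n) = (of_nat (Suc n) :: complex) * fact n" by simp
  moreover have "fact n * (fact n * (inverse (fact n) * inverse (fact n :: complex))) = 1" using f by (simp add: field_simps)
  ultimately show ?thesis unfolding T_def using f
    by (simp add: divide_inverse mult_ac)
qed

lemma A1:
  fixes X1 X2 X3 X4 X5 Y1 Y2 Y3 Y4 Y5 :: real and n :: nat
  assumes "0 \<le> X1" "X1 \<le> Y1" "0 \<le> X2" "X2 \<le> Y2" "0 \<le> X3" "X3 \<le> Y3" "0 \<le> X4" "X4 \<le> Y4" "0 \<le> X5" "X5 \<le> Y5" "n \<ge> 1"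
  shows "X1 * X2 * X3 * X4 * X5 / real (Suc n) \<le> Y1 * Y2 * Y3 * Y4 * Y5 / real n"
proof -
  have m1: "X1 * X2 \<le> Y1 * Y2" by (rule mult_mono) (use assms in auto)
  have m2: "X1 * X2 * X3 \<le> Y1 * Y2 * Y3" by (rule mult_mono[OF m1]) (use assms in auto)
  have m3: "X1 * X2 * X3 * X4 \<le> Y1 * Y2 * Y3 * Y4" by (rule mult_mono[OF m2]) (use assms in auto)
  have "X1 * X2 * X3 * X4 * X5 \<le> Y1 * Y2 * Y3 * Y4 * Y5" by (rule mult_mono[OF m3]) (use assms in auto)
  then show ?thesis by (intro frac_le) (use assms in auto)
qed

lemma A2:
  fixes n :: nat and p1 p2 p3 q1 q2 s C :: real
  assumes "n \<ge> 1" "s = q1 + q2 - p1 - p2 - p3"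
  shows "C * (real n powr p1 * real n powr p2 * real n powr p3 * real n powr (-q1) * real n powr (-q2)) / real n
     = C * real n powr (- 1 - s)"
proof -
  have "real n powr p1 * real n powr p2 * real n powr p3 * real n powr (-q1) * real n powr (-q2) = real n powr (p1 + p2 + p3 + -q1 + -q2)"
    unfolding powr_add ..
  moreover have "real n powr (p1 + p2 + p3 + -q1 + -q2) / real n = real n powr ((p1 + p2 + p3 + -q1 + -q2) - 1)"
    using assms(1) by (simp add: powr_diff powr_one)
  moreover have "(p1 + p2 + p3 + -q1 + -q2) - 1 = - 1 - s" using assms(2) by simp
  ultimately show ?thesis by (metis times_divide_eq_right)
qed
lemma summable_T:
  assumes "Re (b1 + b2 - a1 - a2 - a3) > 0"
  shows "summable (T a1 a2 a3 b1 b2)"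
proof -
  obtain B1 where B1: "B1 > 0" "\<And>n. n \<ge> 1 \<Longrightarrow> norm (pochhammer a1 (Suc n) / fact n) \<le> B1 * real n powr Re a1"
    using num_bound[of a1] by blast
  obtain B2 where B2: "B2 > 0" "\<And>n. n \<ge> 1 \<Longrightarrow> norm (pochhammer a2 (Suc n) / fact n) \<le> B2 * real n powr Re a2"
    using num_bound[of a2] by blast
  obtain B3 where B3: "B3 > 0" "\<And>n. n \<ge> 1 \<Longrightarrow> norm (pochhammer a3 (Suc n) / fact n) \<le> B3 * real n powr Re a3"
    using num_bound[of a3] by blast
  obtain B4 where B4: "B4 > 0" "\<And>n. n \<ge> 1 \<Longrightarrow> norm (fact n / pochhammer b1 (Suc n)) \<le> B4 * real n powr (- Re b1)"
    using den_bound[of b1] by blast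
  obtain B5 where B5: "B5 > 0" "\<And>n. n \<ge> 1 \<Longrightarrow> norm (fact n / pochhammer b2 (Suc n)) \<le> B5 * real n powr (- Re b2)"
    using den_bound[of b2] by blast
  define s where "s = Re (b1 + b2 - a1 - a2 - a3)"
  define C where "C = B1 * B2 * B3 * B4 * B5"
  have "norm (T a1 a2 a3 b1 b2 (Suc n)) \<le> C * real n powr (- 1 - s)" if n: "n \<ge> 1" for n
  proof -
    have "norm (T a1 a2 a3 b1 b2 (Suc n)) =
      norm (pochhammer a1 (Suc n) / fact n) * norm (pochhammer a2 (Suc n) / fact n) * norm (pochhammer a3 (Suc n) / fact n)
     * norm (fact n / pochhammer b1 (Suc n)) * norm (fact n / pochhammer b2 (Suc n)) / real (Suc n)"
      unfolding T_Suc_split norm_divide norm_mult norm_of_nat by simp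
    also have "\<dots> \<le> (B1 * real n powr Re a1) * (B2 * real n powr Re a2) * (B3 * real n powr Re a3)
        * (B4 * real n powr (- Re b1)) * (B5 * real n powr (- Re b2)) / real n"
      by (rule A1) (use n B1 B2 B3 B4 B5 in auto)
    also have "\<dots> = C * (real n powr Re a1 * real n powr Re a2 * real n powr Re a3 * real n powr (- Re b1) * real n powr (- Re b2)) / real n"
      unfolding C_def by (simp only: ac_simps)
    also have "\<dots> = C * real n powr (- 1 - s)"
      by (rule A2) (use n in \<open>simp_all add: s_def\<close>)
    finally show ?thesis .
  qed
  hence ev: "eventually (\<lambda>n. norm (T a1 a2 a3 b1 b2 (Suc n)) \<le> C * real n powr (- 1 - s)) sequentially"
    unfolding eventually_at_top_linorder by blast
  have "summable (\<lambda>n. C * real n powr (- 1 - s))"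
    by (intro summable_mult) (use assms in \<open>simp add: summable_real_powr_iff s_def\<close>)
  hence "summable (\<lambda>n. T a1 a2 a3 b1 b2 (Suc n))"
    by (rule summable_comparison_test_ev[OF ev])
  thus ?thesis by (simp add: summable_Suc_iff)
qed


lemma step1:
  fixes A b c e :: complex
  assumes "e \<noteq> 0" "c \<noteq> 0" "pochhammer (e+1) n \<noteq> 0" "pochhammer (2*c+1) n \<noteq> 0"
  shows "T (A+1) b c e (2*c) (Suc n) - T A b c e (2*c) (Suc n) = b / (2*e) * T (A+1) (b+1) (c+1) (e+1) (2*c+1) n"
proof -
  have h1: "pochhammer (A+1) (Suc n) = (A + (of_nat n + 1)) * pochhammer (A+1) n" by (simp add: pochhammer_rec' algebra_simps)
  have h2: "pochhammer A (Suc n) = A * pochhammer (A+1) n" by (simp add: pochhammer_rec)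
  have h3: "pochhammer b (Suc n) = b * pochhammer (b+1) n" by (simp add: pochhammer_rec)
  have h4: "pochhammer c (Suc n) = c * pochhammer (c+1) n" by (simp add: pochhammer_rec)
  have h5: "pochhammer e (Suc n) = e * pochhammer (e+1) n" by (simp add: pochhammer_rec)
  have h6: "pochhammer (2*c) (Suc n) = (2*c) * pochhammer (2*c+1) n" by (simp add: pochhammer_rec)
  have h7: "fact (Suc n) = (of_nat n + 1) * (fact n :: complex)" by simp
  have f: "(fact n :: complex) \<noteq> 0" by simp
  have n1: "(of_nat n + 1 :: complex) \<noteq> 0" by (metis of_nat_Suc of_nat_eq_0_iff add.commute nat.distinct(1))
  define pA where "pA = pochhammer (A+1) n"
  define pb where "pb = pochhammer (b+1) n"
  define pc where "pc = pochhammer (c+1) n"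
  define pe where "pe = pochhammer (e+1) n"
  define pr where "pr = pochhammer (2*c+1) n"
  define fn where "fn = (fact n :: complex)"
  define m where "m = (of_nat n + 1 :: complex)"
  have m: "m \<noteq> 0" using n1 by (simp add: m_def)
  have nz: "pe \<noteq> 0" "pr \<noteq> 0" "fn \<noteq> 0" using assms f by (auto simp: pe_def pr_def fn_def)
  show ?thesis unfolding T_def h1 h2 h3 h4 h5 h6 h7 unfolding pA_def[symmetric] pb_def[symmetric] pc_def[symmetric]
     pe_def[symmetric] pr_def[symmetric] fn_def[symmetric] m_def[symmetric] using assms(1,2) nz m
    by (simp add: field_simps)
qed

lemma step2:
  fixes P b c e :: complex
  assumes "e + 1 \<noteq> 0" "c \<noteq> 0" "2*c+1 \<noteq> 0" "pochhammer (e+2) n \<noteq> 0" "pochhammer (2*c+2) n \<noteq> 0"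
    "pochhammer (2*c+1) n \<noteq> 0"
  shows "T (P+1) (b+1) (c+1) (e+1) (2*c+1) (Suc n) - T (P+1) (b+1) c (e+1) (2*c) (Suc n)
     = (P+1)*(b+1)/((2*c+1)*(2*(e+1))) * T (P+2) (b+2) (c+1) (e+2) (2*c+2) n"
proof -
  have h1: "pochhammer (P+1) (Suc n) = (P+1) * pochhammer (P+2) n" by (simp add: pochhammer_rec add.assoc)
  have h2: "pochhammer (b+1) (Suc n) = (b+1) * pochhammer (b+2) n" by (simp add: pochhammer_rec add.assoc)
  have h3: "pochhammer (c+1) (Suc n) = (c + (of_nat n + 1)) * pochhammer (c+1) n" by (simp add: pochhammer_rec' algebra_simps)
  have h4: "pochhammer (e+1) (Suc n) = (e+1) * pochhammer (e+2) n" by (simp add: pochhammer_rec add.assoc)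
  have h5: "pochhammer (2*c+1) (Suc n) = (2*c+1) * pochhammer (2*c+2) n" by (simp add: pochhammer_rec add.assoc)
  have h6: "pochhammer c (Suc n) = c * pochhammer (c+1) n" by (simp add: pochhammer_rec)
  have h7: "pochhammer (2*c) (Suc n) = (2*c) * pochhammer (2*c+1) n" by (simp add: pochhammer_rec)
  have h8: "pochhammer (2*c+2) n = pochhammer (2*c+1) n * (2*c+(of_nat n + 1)) / (2*c+1)"
  proof -
    have "pochhammer (2*c+1) (Suc n) = (2*c+(of_nat n + 1)) * pochhammer (2*c+1) n" by (simp add: pochhammer_rec' algebra_simps)
    with h5 assms(3) show ?thesis by (simp add: field_simps)
  qed
  have nz: "2*c+(of_nat n + 1) \<noteq> 0" using assms(5) h8 by auto
  have h9: "fact (Suc n) = (of_nat n + 1) * (fact n :: complex)" by simp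
  have f: "(fact n :: complex) \<noteq> 0" by simp
  have n1: "(of_nat n + 1 :: complex) \<noteq> 0" by (metis of_nat_Suc of_nat_eq_0_iff add.commute nat.distinct(1))
  define pA where "pA = pochhammer (P+2) n"
  define pb where "pb = pochhammer (b+2) n"
  define pc where "pc = pochhammer (c+1) n"
  define pe where "pe = pochhammer (e+2) n"
  define pr where "pr = pochhammer (2*c+1) n"
  define fn where "fn = (fact n :: complex)"
  define m where "m = (of_nat n + 1 :: complex)"
  have m: "m \<noteq> 0" using n1 by (simp add: m_def)
  have nz2: "pe \<noteq> 0" "pr \<noteq> 0" "fn \<noteq> 0" using assms f by (auto simp: pe_def pr_def fn_def)
  define u where "u = 2*c+1"
  define w where "w = 2*c+m"
  define E where "E = e+1"
  have unz: "u \<noteq> 0" "w \<noteq> 0" "E \<noteq> 0" using assms nz by (auto simp: u_def w_def E_def m_def)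
  show ?thesis unfolding T_def h1 h2 h3 h4 h5 h6 h7 h9 h8 unfolding pA_def[symmetric] pb_def[symmetric] pc_def[symmetric]
     pe_def[symmetric] pr_def[symmetric] fn_def[symmetric] m_def[symmetric] 
     unfolding u_def[symmetric] w_def[symmetric] E_def[symmetric] using assms(2) nz2 m unz
    apply (simp add: field_simps)
    apply (simp add: u_def w_def algebra_simps)
    done
qed

lemma poch_nz: "(x::complex) \<notin> \<int>\<^sub>\<le>\<^sub>0 \<Longrightarrow> pochhammer x n \<noteq> 0"
  by (auto simp: pochhammer_eq_0_iff)

lemma G_T: "G k a b c = suminf (T (a + of_nat k) b c ((a + b + 1) / 2) (2 * c))"
  unfolding G_def hyp3F2_def T_def[abs_def] ..

theorem mainTheorem12:
  fixes k :: nat and a b c :: complex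
  assumes "k \<ge> 1"
    and "2 * c \<notin> \<int>\<^sub>\<le>\<^sub>0" and "2 * c + 2 \<notin> \<int>\<^sub>\<le>\<^sub>0"
    and "(a + b + 1) / 2 \<notin> \<int>\<^sub>\<le>\<^sub>0" and "(a + b + 3) / 2 \<notin> \<int>\<^sub>\<le>\<^sub>0"
    and "(a + b + 5) / 2 \<notin> \<int>\<^sub>\<le>\<^sub>0"
    and "2 * c + 1 \<noteq> 0"
    and "Re (2 * c - a - b - 2 * of_nat k + 1) > 0"
  shows "G k a b c = G (k - 1) a b c + b / (a + b + 1) *
           ((a + of_nat k) * (b + 1) / ((2 * c + 1) * (a + b + 3)) * G (k - 1) (a + 2) (b + 2) (c + 1)
            + G (k - 1) (a + 1) (b + 1) c)"
proof -
  define e where "e = (a + b + 1) / 2"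
  define A where "A = a + of_nat (k - 1)"
  have kA: "a + of_nat k = A + 1" using assms(1) unfolding A_def
    by (metis Suc_diff_1 add.assoc less_le_trans of_nat_Suc add.commute zero_less_one)
  have e1: "(a + b + 3) / 2 = e + 1" and e2: "(a + b + 5) / 2 = e + 2" unfolding e_def by (simp_all add: field_simps)
  have enz: "e \<noteq> 0" using assms(4) unfolding e_def by auto
  have e1nz: "e + 1 \<noteq> 0" using assms(5) unfolding e1 by auto
  have cnz: "c \<noteq> 0" using assms(2) by auto
  have c1: "2 * c + 1 \<notin> \<int>\<^sub>\<le>\<^sub>0"
  proof
    assume "2 * c + 1 \<in> \<int>\<^sub>\<le>\<^sub>0"
    then obtain j :: nat where j: "2 * c + 1 = - of_nat j" by (auto elim!: nonpos_Ints_cases')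
    have "j \<noteq> 0" using j assms(7) by auto
    then obtain i where "j = Suc i" by (cases j) auto
    with j have "2 * c + 1 = - (of_nat i + 1)" by simp
    hence "2 * c = - (of_nat i + 1) - 1" by (metis add_diff_cancel_right')
    also have "- (of_nat i + 1) - 1 = - (of_nat (Suc (Suc i)) :: complex)" by simp
    finally have "2 * c = - of_nat (Suc (Suc i))" .
    thus False using assms(2) minus_of_nat_in_nonpos_Ints by metis
  qed
  have pe1: "\<And>n. pochhammer (e+1) n \<noteq> 0" using assms(5) e1 poch_nz by metis
  have pe2: "\<And>n. pochhammer (e+2) n \<noteq> 0" using assms(6) e2 poch_nz by metis
  have pc1: "\<And>n. pochhammer (2*c+1) n \<noteq> 0" using c1 poch_nz by metis
  have pc2: "\<And>n. pochhammer (2*c+2) n \<noteq> 0" using assms(3) poch_nz by metis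
  define T1 where "T1 = T (A+1) b c e (2*c)"
  define T0 where "T0 = T A b c e (2*c)"
  define U where "U = T (A+1) (b+1) (c+1) (e+1) (2*c+1)"
  define V where "V = T (A+1) (b+1) c (e+1) (2*c)"
  define W where "W = T (A+2) (b+2) (c+1) (e+2) (2*c+2)"
  define K where "K = (A+1)*(b+1)/((2*c+1)*(2*(e+1)))"
  have GT1: "G k a b c = suminf T1" unfolding G_T T1_def kA e_def ..
  have GT0: "G (k-1) a b c = suminf T0" unfolding G_T T0_def A_def e_def ..
  have GW: "G (k-1) (a+2) (b+2) (c+1) = suminf W" unfolding G_T W_def
  proof -
    have "a + 2 + of_nat (k-1) = A + 2" unfolding A_def by simp
    moreover have "(a + 2 + (b + 2) + 1) / 2 = e + 2" unfolding e_def by (simp add: field_simps)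
    moreover have "2 * (c + 1) = 2 * c + 2" by simp
    ultimately show "suminf (T (a + 2 + of_nat (k - 1)) (b + 2) (c + 1) ((a + 2 + (b + 2) + 1) / 2) (2 * (c + 1))) =
      suminf (T (A + 2) (b + 2) (c + 1) (e + 2) (2 * c + 2))" by (simp only:)
  qed
  have GV: "G (k-1) (a+1) (b+1) c = suminf V" unfolding G_T V_def
  proof -
    have "a + 1 + of_nat (k-1) = A + 1" unfolding A_def by simp
    moreover have "(a + 1 + (b + 1) + 1) / 2 = e + 1" unfolding e_def by (simp add: field_simps)
    ultimately show "suminf (T (a + 1 + of_nat (k - 1)) (b + 1) c ((a + 1 + (b + 1) + 1) / 2) (2 * c)) =
      suminf (T (A + 1) (b + 1) c (e + 1) (2 * c))" by (simp only:)
  qed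
  define s where "s = Re (2 * c - a - b - 2 * of_nat k + 1)"
  have s: "s > 0" using assms(8) s_def by simp
  have ReA: "Re A = Re a + real k - 1" unfolding A_def using assms(1) by (simp add: of_nat_diff)
  have Ree: "Re e = (Re a + Re b + 1) / 2" unfolding e_def by simp
  have sT1: "summable T1" unfolding T1_def by (rule summable_T) (use s in \<open>simp add: ReA Ree s_def field_simps; linarith\<close>)
  have sT0: "summable T0" unfolding T0_def by (rule summable_T) (use s in \<open>simp add: ReA Ree s_def field_simps; linarith\<close>)
  have sU: "summable U" unfolding U_def by (rule summable_T) (use s in \<open>simp add: ReA Ree s_def field_simps; linarith\<close>)
  have sV: "summable V" unfolding V_def by (rule summable_T) (use s in \<open>simp add: ReA Ree s_def field_simps; linarith\<close>)
  have sW: "summable W" unfolding W_def by (rule summable_T) (use s in \<open>simp add: ReA Ree s_def field_simps; linarith\<close>)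
  have d1: "\<And>n. T1 (Suc n) - T0 (Suc n) = b / (2*e) * U n"
    unfolding T1_def T0_def U_def by (rule step1) (use enz cnz pe1 pc1 in auto)
  have d2: "\<And>n. U (Suc n) - V (Suc n) = K * W n"
    unfolding U_def V_def W_def K_def by (rule step2) (use e1nz cnz assms(7) pe2 pc2 pc1 in auto)
  have z: "T1 0 = 1" "T0 0 = 1" "U 0 = 1" "V 0 = 1" by (simp_all add: T1_def T0_def U_def V_def T_def)
  have "suminf T1 - suminf T0 = (\<Sum>n. T1 (Suc n)) - (\<Sum>n. T0 (Suc n))"
    using suminf_split_head[OF sT1] suminf_split_head[OF sT0] z by simp
  also have "\<dots> = (\<Sum>n. T1 (Suc n) - T0 (Suc n))"
    using sT1 sT0 by (intro suminf_diff[of "\<lambda>n. T1 (Suc n)" "\<lambda>n. T0 (Suc n)"]) (simp_all add: summable_Suc_iff)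
  also have "\<dots> = (\<Sum>n. b / (2*e) * U n)" unfolding d1 ..
  also have "\<dots> = b / (2*e) * suminf U" using sU by (rule suminf_mult)
  finally have r1: "suminf T1 = suminf T0 + b / (2*e) * suminf U" by (simp add: algebra_simps)
  have "suminf U - suminf V = (\<Sum>n. U (Suc n)) - (\<Sum>n. V (Suc n))"
    using suminf_split_head[OF sU] suminf_split_head[OF sV] z by simp
  also have "\<dots> = (\<Sum>n. U (Suc n) - V (Suc n))"
    using sU sV by (intro suminf_diff[of "\<lambda>n. U (Suc n)" "\<lambda>n. V (Suc n)"]) (simp_all add: summable_Suc_iff)
  also have "\<dots> = (\<Sum>n. K * W n)" unfolding d2 ..
  also have "\<dots> = K * suminf W" using sW by (rule suminf_mult)
  finally have r2: "suminf U = suminf V + K * suminf W" by (simp add: algebra_simps)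
  have "2*e = a + b + 1" unfolding e_def by simp
  hence b2e: "b / (2*e) = b / (a + b + 1)" by (simp only:)
  have KK: "K = (a + of_nat k) * (b + 1) / ((2 * c + 1) * (a + b + 3))"
  proof -
    have "2*(e+1) = a + b + 3" unfolding e_def by (simp add: field_simps)
    thus ?thesis unfolding K_def kA by (simp only:)
  qed
  show ?thesis unfolding GT1 GT0 GW GV r1 r2 b2e KK by (simp add: algebra_simps)
qed

end
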